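(* Let $n\ge p$, $\nu>0$, $\boldsymbol\eta\in\mathbb R^p$ with $\max_j\eta_j<1$, and $\boldsymbol d\sim$ IMDY$(\nu,\boldsymbol\eta)$. Fix $d_2,\dots,d_p$, let $g_1(d_1)=\exp(\nu\eta_1d_1)/\left[{}_0F_1\!\left(\tfrac n2,\tfrac{D^2}{4}\right)\right]^\nu$ be the unnormalized conditional density of $d_1$ given $(d_2,\dots,d_p)$, and let $m$ be its mode. If $\epsilon>0$ and $B>m$ satisfy $g_1(B)/g_1(m)<\epsilon$, then $P(d_1>B\mid d_2,\dots,d_p)<\epsilon$.
   Context: $D=\mathrm{diag}(d_1,\dots,d_p)$; $\mathcal V_{n,p}=\{X\in\mathbb R^{n\times p}:X^TX=I_p\}$ with normalized Haar probability measure $[dX]$; ${}_0F_1\!\left(\tfrac n2,\tfrac{D^2}{4}\right)=\int_{\mathcal V_{n,p}}\exp\big(\sum_j d_jX_{jj}\big)[dX]$. IMDY$(\nu,\boldsymbol\eta)$ is the distribution on $\mathbb R_+^p$ with Lebesgue density proportional to $\exp(\nu\boldsymbol\eta^T\boldsymbol d)/[{}_0F_1(\tfrac n2,\tfrac{D^2}4)]^\nu$. *)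

theory Defs
  imports "HOL-Probability.Probability"
begin

text \<open>Real n x p matrices are represented as functions on index pairs
  (row k < n, column j < p), extensional outside the index set, with the
  product Lebesgue-Borel measure space.\<close>

definition mat_space :: "nat \<Rightarrow> nat \<Rightarrow> (nat \<times> nat \<Rightarrow> real) measure" where
  "mat_space n p = PiM ({..<n} \<times> {..<p}) (\<lambda>_. lborel)"

definition stiefel :: "nat \<Rightarrow> nat \<Rightarrow> (nat \<times> nat \<Rightarrow> real) set" where
  "stiefel n p = {X \<in> extensional ({..<n} \<times> {..<p}).
     \<forall>i<p. \<forall>j<p. (\<Sum>k<n. X (k,i) * X (k,j)) = (if i = j then 1 else 0)}"

definition orthogonal_mat :: "nat \<Rightarrow> (nat \<Rightarrow> nat \<Rightarrow> real) \<Rightarrow> bool" where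
  "orthogonal_mat n Q \<longleftrightarrow>
     (\<forall>i<n. \<forall>j<n. (\<Sum>k<n. Q k i * Q k j) = (if i = j then 1 else 0))"

definition lmult :: "nat \<Rightarrow> nat \<Rightarrow> (nat \<Rightarrow> nat \<Rightarrow> real) \<Rightarrow> (nat \<times> nat \<Rightarrow> real) \<Rightarrow> (nat \<times> nat \<Rightarrow> real)" where
  "lmult n p Q X = restrict (\<lambda>(k,j). \<Sum>l<n. Q k l * X (l,j)) ({..<n} \<times> {..<p})"

definition haar_stiefel :: "nat \<Rightarrow> nat \<Rightarrow> (nat \<times> nat \<Rightarrow> real) measure" where
  "haar_stiefel n p = (THE \<mu>. prob_space \<mu> \<and> sets \<mu> = sets (mat_space n p)
     \<and> emeasure \<mu> (stiefel n p) = 1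
     \<and> (\<forall>Q. orthogonal_mat n Q \<longrightarrow> distr \<mu> (mat_space n p) (lmult n p Q) = \<mu>))"

text \<open>0F1(n/2, D^2/4) = integral over V_{n,p} of exp(sum_j d_j X_jj) [dX];
  indices are 0-based (d_1 is d 0).\<close>
definition hyp0F1 :: "nat \<Rightarrow> nat \<Rightarrow> (nat \<Rightarrow> real) \<Rightarrow> real" where
  "hyp0F1 n p d = (\<integral>X. exp (\<Sum>j<p. d j * X (j,j)) \<partial>haar_stiefel n p)"

end

theory Submission
  imports Defs
begin

lemma aux_exp: "x * exp (- y) \<le> 1 \<Longrightarrow> x \<le> exp (y::real)"
  by (simp add: exp_minus divide_le_eq flip: divide_inverse)

lemma exp_holder:
  fixes M :: "'a measure" and a b :: "'a \<Rightarrow> real"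
  defines "F \<equiv> \<lambda>v. \<integral>X. exp (v * a X + b X) \<partial>M"
  assumes pu: "F u > 0" and pw: "F w > 0" and uv: "u \<le> v" and vw: "v \<le> w" and uw: "u < w"
  shows "F v > 0 \<and> ln (F v) \<le> ((w - v)/(w - u)) * ln (F u) + ((v - u)/(w - u)) * ln (F w)"
proof -
  define l where "l = (w - v)/(w - u)"
  have l0: "0 \<le> l" and l1: "l \<le> 1" using uv vw uw by (auto simp: l_def field_simps)
  have lw: "l * (w - u) = w - v" using uw by (simp add: l_def)
  have lv: "v = l * u + (1 - l) * w" using lw by (simp add: algebra_simps)
  have 1: "(v - u)/(w - u) = 1 - l" using uw by (simp add: l_def field_simps)
  have iu: "integrable M (\<lambda>X. exp (u * a X + b X))"
    using pu not_integrable_integral_eq unfolding F_def by force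
  have iw: "integrable M (\<lambda>X. exp (w * a X + b X))"
    using pw not_integrable_integral_eq unfolding F_def by force
  have mu: "(\<lambda>X. u * a X + b X) \<in> borel_measurable M"
  proof -
    have "(\<lambda>X. ln (exp (u * a X + b X))) \<in> borel_measurable M"
      using iu by measurable
    then show ?thesis by simp
  qed
  have mw: "(\<lambda>X. w * a X + b X) \<in> borel_measurable M"
  proof -
    have "(\<lambda>X. ln (exp (w * a X + b X))) \<in> borel_measurable M"
      using iw by measurable
    then show ?thesis by simp
  qed
  have ma: "a \<in> borel_measurable M"
  proof -
    have "(\<lambda>X. ((w * a X + b X) - (u * a X + b X)) / (w - u)) \<in> borel_measurable M"
      using mu mw by measurable
    moreover have "\<And>X. ((w * a X + b X) - (u * a X + b X)) / (w - u) = a X"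
      using uw by (simp add: field_simps)
    ultimately show ?thesis by simp
  qed
  have mb: "b \<in> borel_measurable M"
  proof -
    have "(\<lambda>X. (u * a X + b X) - u * a X) \<in> borel_measurable M"
      using mu ma by measurable
    then show ?thesis by simp
  qed
  have conv: "\<And>p q. exp (l * p + (1 - l) * q) \<le> l * exp p + (1 - l) * exp q"
  proof -
    fix p q :: real
    have "exp ((1 - (1 - l)) *\<^sub>R p + (1 - l) *\<^sub>R q) \<le> (1 - (1 - l)) * exp p + (1 - l) * exp q"
      by (rule convex_onD[OF exp_convex]) (use l0 l1 in auto)
    then show "exp (l * p + (1 - l) * q) \<le> l * exp p + (1 - l) * exp q" by simp
  qed
  have fv: "\<And>X. exp (v * a X + b X) = exp (l * (u * a X + b X) + (1 - l) * (w * a X + b X))"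
    by (simp add: lv algebra_simps)
  have iv: "integrable M (\<lambda>X. exp (v * a X + b X))"
  proof (rule Bochner_Integration.integrable_bound[where f = "\<lambda>X. l * exp (u * a X + b X) + (1 - l) * exp (w * a X + b X)"])
    show "integrable M (\<lambda>X. l * exp (u * a X + b X) + (1 - l) * exp (w * a X + b X))"
      using iu iw by simp
    show "(\<lambda>X. exp (v * a X + b X)) \<in> borel_measurable M" using ma mb by measurable
    show "AE X in M. norm (exp (v * a X + b X)) \<le> norm (l * exp (u * a X + b X) + (1 - l) * exp (w * a X + b X))"
      using conv fv l0 l1 by (auto intro!: AE_I2)
  qed
  have Fv0: "F v > 0"
  proof (rule ccontr)
    assume "\<not> F v > 0"
    moreover have "F v \<ge> 0" unfolding F_def by (rule integral_nonneg_AE) simp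
    ultimately have "F v = 0" by simp
    then have "AE X in M. exp (v * a X + b X) = 0"
      using integral_nonneg_eq_0_iff_AE[OF iv] unfolding F_def by simp
    then have "AE X in M. exp (u * a X + b X) = 0" by (rule AE_mp) simp
    then have "F u = (\<integral>X. 0 \<partial>M)" unfolding F_def
      by (intro integral_cong_AE) (use mu in auto)
    then have "F u = 0" by simp
    with pu show False by simp
  qed
  define Lu Lw where "Lu = ln (F u)" and "Lw = ln (F w)"
  have eu: "exp Lu = F u" and ew: "exp Lw = F w" using pu pw by (auto simp: Lu_def Lw_def)
  have eqX: "\<And>X. exp (l * (u * a X + b X - Lu) + (1 - l) * (w * a X + b X - Lw)) = exp (v * a X + b X) * exp (- (l * Lu + (1 - l) * Lw))"
    by (simp add: lv exp_add[symmetric] algebra_simps)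
  have "F v * exp (- (l * Lu + (1 - l) * Lw)) = (\<integral>X. exp (l * (u * a X + b X - Lu) + (1 - l) * (w * a X + b X - Lw)) \<partial>M)"
    unfolding F_def eqX by simp
  also have "\<dots> \<le> (\<integral>X. l * exp (u * a X + b X - Lu) + (1 - l) * exp (w * a X + b X - Lw) \<partial>M)"
  proof (rule integral_mono)
    show "integrable M (\<lambda>X. exp (l * (u * a X + b X - Lu) + (1 - l) * (w * a X + b X - Lw)))"
      unfolding eqX using iv by simp
    show "integrable M (\<lambda>X. l * exp (u * a X + b X - Lu) + (1 - l) * exp (w * a X + b X - Lw))"
      using iu iw by (simp add: exp_diff)
    show "\<And>X. exp (l * (u * a X + b X - Lu) + (1 - l) * (w * a X + b X - Lw)) \<le> l * exp (u * a X + b X - Lu) + (1 - l) * exp (w * a X + b X - Lw)"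
      by (rule conv)
  qed
  also have "\<dots> = l * (F u / exp Lu) + (1 - l) * (F w / exp Lw)"
    unfolding F_def using iu iw by (simp add: exp_diff)
  also have "\<dots> = 1" using eu ew pu pw by simp
  finally have "F v * exp (- (l * Lu + (1 - l) * Lw)) \<le> 1" .
  then have "F v \<le> exp (l * Lu + (1 - l) * Lw)"
    by (rule aux_exp)
  then have "ln (F v) \<le> l * Lu + (1 - l) * Lw" using Fv0
    by (metis ln_exp ln_le_cancel_iff exp_gt_zero)
  then show ?thesis using Fv0 1 by (simp add: l_def Lu_def Lw_def)
qed

lemma key_ineq:
  fixes \<nu> c B m :: real and H g :: "real \<Rightarrow> real" and M :: "'a measure" and a b :: "'a \<Rightarrow> real"
  assumes H: "\<And>x. H x = (\<integral>X. exp (x * a X + b X) \<partial>M)"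
    and g: "\<And>x. g x = exp (c * x) / (H x) powr \<nu>"
    and "\<nu> > 0" and "m < B" and "B < x"
  shows "g x * g m \<le> g B * g (x - B + m)"
proof -
  have Hnn: "\<And>y. H y \<ge> 0" unfolding H by (rule integral_nonneg_AE) simp
  have gnn: "\<And>y. g y \<ge> 0" unfolding g by simp
  have gpos: "\<And>y. H y > 0 \<Longrightarrow> g y = exp (c * y - \<nu> * ln (H y))"
    unfolding g by (simp add: powr_def exp_diff)
  show ?thesis
  proof (cases "H x > 0 \<and> H m > 0")
    case False
    then have "H x = 0 \<or> H m = 0" using Hnn[of x] Hnn[of m] by linarith
    then have "g x = 0 \<or> g m = 0" unfolding g by auto
    then show ?thesis using gnn by (auto intro: mult_nonneg_nonneg)
  next
    case True
    have h1: "H B > 0 \<and> ln (H B) \<le> ((x - B)/(x - m)) * ln (H m) + ((B - m)/(x - m)) * ln (H x)"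
      using exp_holder[where a=a and b=b and M=M and u=m and w=x and v=B] True assms unfolding H[abs_def] by auto
    have h2: "H (x - B + m) > 0 \<and> ln (H (x - B + m)) \<le> ((x - (x - B + m))/(x - m)) * ln (H m) + (((x - B + m) - m)/(x - m)) * ln (H x)"
      using exp_holder[where a=a and b=b and M=M and u=m and w=x and v="x - B + m"] True assms unfolding H[abs_def] by auto
    have s1: "((x - B)/(x - m)) + ((x - (x - B + m))/(x - m)) = 1"
    proof -
      have "((x - B)/(x - m)) + ((x - (x - B + m))/(x - m)) = ((x - B) + (x - (x - B + m)))/(x - m)"
        by (rule add_divide_distrib[symmetric])
      also have "\<dots> = 1" using assms by simp
      finally show ?thesis .
    qed
    have s2: "((B - m)/(x - m)) + (((x - B + m) - m)/(x - m)) = 1"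
    proof -
      have "((B - m)/(x - m)) + (((x - B + m) - m)/(x - m)) = ((B - m) + ((x - B + m) - m))/(x - m)"
        by (rule add_divide_distrib[symmetric])
      also have "\<dots> = 1" using assms by simp
      finally show ?thesis .
    qed
    have "ln (H B) + ln (H (x - B + m)) \<le> ln (H m) + ln (H x)"
    proof -
      have "ln (H B) + ln (H (x - B + m)) \<le> (((x - B)/(x - m)) + ((x - (x - B + m))/(x - m))) * ln (H m)
           + (((B - m)/(x - m)) + (((x - B + m) - m)/(x - m))) * ln (H x)"
        using h1 h2 by (simp add: algebra_simps)
      then show ?thesis unfolding s1 s2 by simp
    qed
    then have "(c * x - \<nu> * ln (H x)) + (c * m - \<nu> * ln (H m)) \<le> (c * B - \<nu> * ln (H B)) + (c * (x - B + m) - \<nu> * ln (H (x - B + m)))"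
      using \<open>\<nu> > 0\<close> by (simp add: algebra_simps) (metis mult_left_mono less_imp_le distrib_left add.commute)
    then show ?thesis using True h1 h2 by (simp add: gpos exp_add[symmetric])
  qed
qed


theorem lemma11:
  fixes n p :: nat and \<nu> \<epsilon> B m :: real and \<eta> d :: "nat \<Rightarrow> real"
    and g :: "real \<Rightarrow> real"
  assumes "1 \<le> p" and "p \<le> n" and "\<nu> > 0"
    and "\<forall>j<p. \<eta> j < 1"
    and "\<forall>j\<in>{1..<p}. d j \<ge> 0"
    and "g = (\<lambda>x. exp (\<nu> * \<eta> 0 * x) / (hyp0F1 n p (d(0 := x))) powr \<nu>)"
    and "m \<ge> 0" and "\<forall>x\<ge>0. g x \<le> g m"
    and "\<epsilon> > 0" and "B > m" and "g B / g m < \<epsilon>"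
  shows "(LINT x:{B<..}|lborel. g x) / (LINT x:{0..}|lborel. g x) < \<epsilon>"
proof -
  define a :: "(nat \<times> nat \<Rightarrow> real) \<Rightarrow> real" where "a = (\<lambda>X. X (0,0))"
  define b :: "(nat \<times> nat \<Rightarrow> real) \<Rightarrow> real" where "b = (\<lambda>X. \<Sum>j\<in>{1..<p}. d j * X (j,j))"
  define H where "H = (\<lambda>x. hyp0F1 n p (d(0 := x)))"
  have psplit: "{..<p} = insert 0 {1..<p}" using assms(1) by auto
  have H: "\<And>x. H x = (\<integral>X. exp (x * a X + b X) \<partial>haar_stiefel n p)"
  proof -
    fix x
    have "\<And>X. (\<Sum>j<p. (d(0 := x)) j * X (j,j)) = x * a X + b X"
    proof -
      fix X :: "nat \<times> nat \<Rightarrow> real"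
      have "(\<Sum>j<p. (d(0 := x)) j * X (j,j)) = x * X (0,0) + (\<Sum>j\<in>{1..<p}. (d(0 := x)) j * X (j,j))"
        unfolding psplit by (simp add: sum.insert)
      also have "(\<Sum>j\<in>{1..<p}. (d(0 := x)) j * X (j,j)) = b X"
        unfolding b_def by (rule sum.cong) auto
      finally show "(\<Sum>j<p. (d(0 := x)) j * X (j,j)) = x * a X + b X" by (simp add: a_def)
    qed
    then show "H x = (\<integral>X. exp (x * a X + b X) \<partial>haar_stiefel n p)"
      unfolding H_def hyp0F1_def by simp
  qed
  have gdef: "\<And>x. g x = exp ((\<nu> * \<eta> 0) * x) / (H x) powr \<nu>"
    using assms(6) unfolding H_def by simp
  have key: "\<And>x. B < x \<Longrightarrow> g x * g m \<le> g B * g (x - B + m)"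
    by (rule key_ineq[OF H gdef]) (use assms in auto)
  have gnn: "\<And>y. g y \<ge> 0" unfolding gdef by simp
  define T where "T = (LINT x:{B<..}|lborel. g x)"
  define Tot where "Tot = (LINT x:{0..}|lborel. g x)"
  have Tnn: "T \<ge> 0" unfolding T_def set_lebesgue_integral_def
    by (rule integral_nonneg_AE) (use gnn in auto)
  have Totnn: "Tot \<ge> 0" unfolding Tot_def set_lebesgue_integral_def
    by (rule integral_nonneg_AE) (use gnn in auto)
  have gmnn: "g m \<ge> 0" by (rule gnn)
  show ?thesis
  proof (cases "set_integrable lborel {B<..} g \<and> set_integrable lborel {0..} g")
    case False
    then have "T = 0 \<or> Tot = 0" unfolding T_def Tot_def set_integrable_def set_lebesgue_integral_def
      using not_integrable_integral_eq by blast
    then show ?thesis using assms(9) unfolding T_def[symmetric] Tot_def[symmetric] by auto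
  next
    case True
    have iT: "integrable lborel (\<lambda>x. indicator {B<..} x * g x)"
      using True unfolding set_integrable_def by simp
    have iTot: "integrable lborel (\<lambda>x. indicator {0..} x * g x)"
      using True unfolding set_integrable_def by simp
    define f where "f = (\<lambda>y. indicator {m<..} y * g y)"
    have if0: "integrable lborel f"
    proof -
      have "set_integrable lborel {m<..} g"
        by (rule set_integrable_subset[OF conjunct2[OF True]]) (use assms(7) in auto)
      then show ?thesis unfolding f_def set_integrable_def by simp
    qed
    have fshift: "\<And>x. f ((m - B) + 1 * x) = indicator {B<..} x * g (x - B + m)"
      unfolding f_def by (auto simp: indicator_def algebra_simps)
    have if1: "integrable lborel (\<lambda>x. indicator {B<..} x * g (x - B + m))"
      using lborel_integrable_real_affine[OF if0, of 1 "m - B"] unfolding fshift by simp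
    have "T * g m = (\<integral>x. indicator {B<..} x * g x * g m \<partial>lborel)"
      unfolding T_def set_lebesgue_integral_def by simp
    also have "\<dots> \<le> (\<integral>x. g B * (indicator {B<..} x * g (x - B + m)) \<partial>lborel)"
    proof (rule integral_mono)
      show "integrable lborel (\<lambda>x. indicator {B<..} x * g x * g m)" using iT by simp
      show "integrable lborel (\<lambda>x. g B * (indicator {B<..} x * g (x - B + m)))" using if1 by simp
      show "indicator {B<..} x * g x * g m \<le> g B * (indicator {B<..} x * g (x - B + m))" for x
        using key[of x] by (auto simp: indicator_def)
    qed
    also have "\<dots> = g B * (\<integral>x. f ((m - B) + 1 * x) \<partial>lborel)"
      unfolding fshift by simp
    also have "(\<integral>x. f ((m - B) + 1 * x) \<partial>lborel) = (\<integral>x. f x \<partial>lborel)"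
      using lborel_integral_real_affine[of 1 f "m - B"] by simp
    also have "(\<integral>x. f x \<partial>lborel) \<le> Tot"
      unfolding Tot_def set_lebesgue_integral_def
    proof (rule integral_mono)
      show "integrable lborel f" by (rule if0)
      show "integrable lborel (\<lambda>x. indicator {0..} x *\<^sub>R g x)" using iTot by simp
      show "f x \<le> indicator {0..} x *\<^sub>R g x" for x
        unfolding f_def using assms(7) gnn[of x] by (auto simp: indicator_def)
    qed
    finally have main: "T * g m \<le> g B * Tot" using gnn[of B] by (simp add: mult_left_mono)
    show ?thesis
    proof (cases "g m = 0")
      case True
      have z: "\<And>x. indicator {B<..} x *\<^sub>R g x = (0::real)"
      proof -
        fix x show "indicator {B<..} x *\<^sub>R g x = (0::real)"
          using assms(7,8,10) True gnn[of x] by (auto simp: indicator_def) (smt (verit))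
      qed
      have "T = 0" unfolding T_def set_lebesgue_integral_def z by simp
      then show ?thesis using assms(9) unfolding T_def[symmetric] Tot_def[symmetric] by simp
    next
      case False
      then have gmp: "g m > 0" using gmnn by simp
      show ?thesis
      proof (cases "Tot = 0")
        case True then show ?thesis using assms(9) unfolding T_def[symmetric] Tot_def[symmetric] by simp
      next
        case False
        then have Tp: "Tot > 0" using Totnn by simp
        have "T / Tot \<le> g B / g m"
          using main gmp Tp by (simp add: divide_le_eq le_divide_eq mult.commute mult.left_commute)
        then show ?thesis using assms(11) unfolding T_def[symmetric] Tot_def[symmetric] by simp
      qed
    qed
  qed
qed

end
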